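(* Let $A,M\in\mathbb{C}^{n\times n}$ be Hermitian with $M$ positive definite, and let the eigenvalues of the pair $(A,M)$ be $\lambda_1<\lambda_2\le\cdots\le\lambda_n$. Put $A_{\lambda_1}=A-\lambda_1 M$. Let $T\in\mathbb{C}^{n\times n}$ be Hermitian positive definite. Let $x^{(0)}\in\mathbb{C}^n$ be neither an eigenvector of $(A,M)$ associated with $\lambda_1$ nor $M$-orthogonal to the eigenspace associated with $\lambda_1$, and let $x^{(0)},x^{(1)},\ldots$ be the iterates of the following heuristic preconditioned CG iteration (for as long as it is defined): set $r^{(0)}=-A_{\lambda_1}x^{(0)}$, $\gamma^{(0)}=(Tr^{(0)})^*r^{(0)}$, $p^{(0)}=Tr^{(0)}$, and for $i=0,1,\ldots$: $w=A_{\lambda_1}p^{(i)}$, $\delta=\gamma^{(i)}/(w^*p^{(i)})$, $x^{(i+1)}=x^{(i)}+\delta p^{(i)}$, $r^{(i+1)}=r^{(i)}-\delta w$, $\gamma^{(i+1)}=(Tr^{(i+1)})^*r^{(i+1)}$, $p^{(i+1)}=Tr^{(i+1)}+(\gamma^{(i+1)}/\gamma^{(i)})p^{(i)}$. Define $B=T^{1/2}A_{\lambda_1}T^{1/2}$ and let $V$ be an arbitrary matrix whose columns form an orthonormal basis of the image $\operatorname{im}(B)$. Then the vectors $\tilde{x}^{(i)}=V^*T^{-1/2}x^{(i)}$, $i=0,1,\ldots$, are the iterates of the standard (non-preconditioned) conjugate gradient method applied to the linear system $\tilde{B}\tilde{x}=0$ with $\tilde{B}=V^*BV$ and initial guess 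$\tilde{x}^{(0)}$.
   Context: $T^{1/2}$ denotes the Hermitian positive definite square root of $T$. The asterisk denotes the conjugate transpose. *)

theory Defs
  imports "Jordan_Normal_Form.Schur_Decomposition" "Jordan_Normal_Form.Char_Poly"
begin

text \<open>u^* v (conjugate transpose of u times v)\<close>
definition hinner :: "complex vec \<Rightarrow> complex vec \<Rightarrow> complex" where
  "hinner u v = v \<bullet>c u"

definition hermitian :: "complex mat \<Rightarrow> bool" where
  "hermitian A \<longleftrightarrow> square_mat A \<and> mat_adjoint A = A"

definition pos_def :: "complex mat \<Rightarrow> bool" where
  "pos_def A \<longleftrightarrow> hermitian A \<and>
     (\<forall>x \<in> carrier_vec (dim_row A). x \<noteq> 0\<^sub>v (dim_row A) \<longrightarrow> Re (hinner x (A *\<^sub>v x)) > 0)"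

definition psqrt :: "complex mat \<Rightarrow> complex mat" where
  "psqrt T = (THE S. S \<in> carrier_mat (dim_row T) (dim_row T) \<and> pos_def S \<and> S * S = T)"

definition psqrt_inv :: "complex mat \<Rightarrow> complex mat" where
  "psqrt_inv T = (THE S. S \<in> carrier_mat (dim_row T) (dim_row T) \<and>
      S * psqrt T = 1\<^sub>m (dim_row T) \<and> psqrt T * S = 1\<^sub>m (dim_row T))"

text \<open>Characteristic polynomial det(lambda M - A) of the pencil (A,M); its roots, counted
  with multiplicity (order), are the eigenvalues of the pair (A,M).\<close>
definition pencil_char_poly :: "complex mat \<Rightarrow> complex mat \<Rightarrow> complex poly" where
  "pencil_char_poly A M = det (mat (dim_row A) (dim_col A) (\<lambda>(i,j). [: - A $$ (i,j), M $$ (i,j) :]))"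

text \<open>Heuristic preconditioned CG with matrix Al = A - lambda_1 M and preconditioner T.
  State: (x, r, gamma, p).\<close>
fun pcg :: "complex mat \<Rightarrow> complex mat \<Rightarrow> complex vec \<Rightarrow> nat \<Rightarrow>
    complex vec \<times> complex vec \<times> complex \<times> complex vec" where
  "pcg Al T x0 0 =
     (let r = - (Al *\<^sub>v x0) in (x0, r, hinner (T *\<^sub>v r) r, T *\<^sub>v r))"
| "pcg Al T x0 (Suc i) =
     (let (x, r, g, p) = pcg Al T x0 i;
          w = Al *\<^sub>v p;
          \<delta> = g / hinner w p;
          x' = x + \<delta> \<cdot>\<^sub>v p;
          r' = r - \<delta> \<cdot>\<^sub>v w;
          g' = hinner (T *\<^sub>v r') r';
          p' = T *\<^sub>v r' + (g' / g) \<cdot>\<^sub>v p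
      in (x', r', g', p'))"

definition pcg_x :: "complex mat \<Rightarrow> complex mat \<Rightarrow> complex vec \<Rightarrow> nat \<Rightarrow> complex vec" where
  "pcg_x Al T x0 i = fst (pcg Al T x0 i)"

text \<open>The first N iterates x^(0..N) are defined: all divisions used are by nonzero numbers.\<close>
definition pcg_defined :: "complex mat \<Rightarrow> complex mat \<Rightarrow> complex vec \<Rightarrow> nat \<Rightarrow> bool" where
  "pcg_defined Al T x0 N \<longleftrightarrow>
     (\<forall>j < N. case pcg Al T x0 j of (x, r, g, p) \<Rightarrow> hinner (Al *\<^sub>v p) p \<noteq> 0) \<and>
     (\<forall>j. Suc j < N \<longrightarrow> (case pcg Al T x0 j of (x, r, g, p) \<Rightarrow> g \<noteq> 0))"

fun cg :: "complex mat \<Rightarrow> complex vec \<Rightarrow> nat \<Rightarrow> complex vec \<times> complex vec \<times> complex vec" where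
  "cg B y0 0 = (let r = - (B *\<^sub>v y0) in (y0, r, r))"
| "cg B y0 (Suc i) =
     (let (y, r, p) = cg B y0 i;
          \<alpha> = hinner r r / hinner p (B *\<^sub>v p);
          y' = y + \<alpha> \<cdot>\<^sub>v p;
          r' = r - \<alpha> \<cdot>\<^sub>v (B *\<^sub>v p);
          \<beta> = hinner r' r' / hinner r r;
          p' = r' + \<beta> \<cdot>\<^sub>v p
      in (y', r', p'))"

definition cg_x :: "complex mat \<Rightarrow> complex vec \<Rightarrow> nat \<Rightarrow> complex vec" where
  "cg_x B y0 i = fst (cg B y0 i)"

definition cg_defined :: "complex mat \<Rightarrow> complex vec \<Rightarrow> nat \<Rightarrow> bool" where
  "cg_defined B y0 N \<longleftrightarrow>
     (\<forall>j < N. case cg B y0 j of (y, r, p) \<Rightarrow> hinner p (B *\<^sub>v p) \<noteq> 0) \<and>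
     (\<forall>j. Suc j < N \<longrightarrow> (case cg B y0 j of (y, r, p) \<Rightarrow> hinner r r \<noteq> 0))"

end

theory Submission
  imports Defs
begin


lemma hinner_sum:
  assumes "u \<in> carrier_vec n" "v \<in> carrier_vec n"
  shows "hinner u v = (\<Sum>i<n. cnj (u $ i) * v $ i)"
  using assms unfolding hinner_def scalar_prod_def
  by (auto simp: lessThan_atLeast0 intro!: sum.cong)

lemma adj_carrier[simp]: "A \<in> carrier_mat m n \<Longrightarrow> mat_adjoint A \<in> carrier_mat n m"
  unfolding mat_adjoint_def by auto

lemma adj_dims[simp]: "dim_row (mat_adjoint A) = dim_col A" "dim_col (mat_adjoint A) = dim_row A"
  unfolding mat_adjoint_def by auto

lemma adj_index[simp]: "i < dim_col A \<Longrightarrow> j < dim_row A \<Longrightarrow> mat_adjoint A $$ (i,j) = cnj (A $$ (j,i))"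
  unfolding mat_adjoint_def by (auto simp: mat_of_rows_def)

lemma eigen_exists:
  fixes A :: "complex mat"
  assumes A: "A \<in> carrier_mat (Suc m) (Suc m)"
  shows "\<exists>e v. v \<in> carrier_vec (Suc m) \<and> v \<noteq> 0\<^sub>v (Suc m) \<and> A *\<^sub>v v = e \<cdot>\<^sub>v v"
proof -
  obtain as where cp: "char_poly A = (\<Prod>a\<leftarrow>as. [:- a, 1:])" and len: "length as = Suc m"
    using char_poly_factorized[OF A] by auto
  then obtain e as' where as: "as = e # as'" by (cases as) auto
  have "poly (char_poly A) e = 0" unfolding cp as by (simp add: poly_prod_list)
  then have "eigenvalue A e" using eigenvalue_root_char_poly[OF A] by simp
  then obtain v where "eigenvector A v e" unfolding eigenvalue_def by auto
  then show ?thesis unfolding eigenvector_def using A by auto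
qed

lemma hinner_self_real: "w \<in> carrier_vec n \<Longrightarrow> hinner w w = complex_of_real (\<Sum>i<n. (cmod (w $ i))^2)"
proof -
  assume w: "w \<in> carrier_vec n"
  have "hinner w w = (\<Sum>i<n. cnj (w $ i) * w $ i)" using hinner_sum[OF w w] .
  also have "\<dots> = (\<Sum>i<n. complex_of_real ((cmod (w $ i))^2))"
    by (intro sum.cong refl) (metis complex_norm_square mult.commute)
  finally show ?thesis by simp
qed

lemma hinner_self_pos: assumes "w \<in> carrier_vec n" "w \<noteq> 0\<^sub>v n" shows "Re (hinner w w) > 0" "hinner w w = complex_of_real (Re (hinner w w))"
proof -
  have "hinner w w \<noteq> 0" unfolding hinner_def using assms conjugate_square_eq_0_vec by blast
  moreover have "Re (hinner w w) \<ge> 0" using hinner_self_real[OF assms(1)] by (simp add: sum_nonneg)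
  ultimately show "Re (hinner w w) > 0" "hinner w w = complex_of_real (Re (hinner w w))"
    using hinner_self_real[OF assms(1)] by (auto simp: complex_eq_iff less_le)
qed

lemma adj_mult_index:
  assumes W: "W \<in> carrier_mat n m" and i: "i < m" and j: "j < m"
  shows "(mat_adjoint W * W) $$ (i,j) = hinner (col W i) (col W j)"
  using W i j by (auto simp: hinner_sum[of _ n] scalar_prod_def lessThan_atLeast0 intro!: sum.cong)

lemma unitary_ext:
  fixes v :: "complex vec"
  assumes v: "v \<in> carrier_vec n" and v1: "hinner v v = 1"
  shows "\<exists>W \<in> carrier_mat n n. mat_adjoint W * W = 1\<^sub>m n \<and> col W 0 = v"
proof -
  interpret cof_vec_space n "TYPE(complex)" .
  have v0: "v \<noteq> 0\<^sub>v n" using v1 v by (auto simp: hinner_sum)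
  define b where "b = basis_completion v"
  from basis_completion[OF v v0, folded b_def]
  have dist_b: "distinct b" 
    and indep: "\<not> lin_dep (set b)" and b: "set b \<subseteq> carrier_vec n" and hdb: "hd b = v" 
    and len_b: "length b = n" by auto
  have n: "n \<noteq> 0" using v0 v by (auto intro: eq_vecI)
  from hdb len_b n obtain vs where bv: "b = v # vs" by (cases b, auto)
  define ws where "ws = gram_schmidt n b"
  from gram_schmidt_result[OF b dist_b indep refl, folded ws_def]
  have ws: "set ws \<subseteq> carrier_vec n" "corthogonal ws" "length ws = n" 
    by (auto simp: len_b)
  from gram_schmidt_hd[OF v, of vs, folded bv] have hdws: "hd ws = v" unfolding ws_def .
  define nm where "nm = (\<lambda>w. complex_of_real (1 / sqrt (Re (hinner w w))))"
  define us where "us = map (\<lambda>w. nm w \<cdot>\<^sub>v w) ws"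
  define W where "W = mat_of_cols n us"
  have us: "set us \<subseteq> carrier_vec n" "length us = n" unfolding us_def using ws by auto
  have W: "W \<in> carrier_mat n n" unfolding W_def using us mat_of_cols_carrier(1)[of n us] by simp
  have wsi: "ws ! i \<in> carrier_vec n" if "i < n" for i using ws that by auto
  have colW: "col W i = nm (ws ! i) \<cdot>\<^sub>v ws ! i" if "i < n" for i
    unfolding W_def using that us ws wsi[OF that] by (simp add: us_def)
  have ws0: "ws ! 0 = v" using hdws ws n by (cases ws) auto
  have "nm v = 1" unfolding nm_def v1 by simp
  then have col0: "col W 0 = v" using colW[of 0] n ws0 v by simp
  have WW: "mat_adjoint W * W = 1\<^sub>m n"
  proof (rule eq_matI)
    fix i j assume "i < dim_row (1\<^sub>m n)" "j < dim_col (1\<^sub>m n)"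
    then have i: "i < n" and j: "j < n" by auto
    have "(mat_adjoint W * W) $$ (i,j) = hinner (col W i) (col W j)"
      by (rule adj_mult_index[OF W i j])
    also have "\<dots> = cnj (nm (ws ! i)) * nm (ws ! j) * hinner (ws ! i) (ws ! j)"
      unfolding colW[OF i] colW[OF j] using wsi[OF i] wsi[OF j]
      by (simp add: hinner_sum[of _ n] sum_distrib_left mult_ac)
    also have "\<dots> = 1\<^sub>m n $$ (i,j)"
    proof (cases "i = j")
      case True
      have nz: "ws ! i \<noteq> 0\<^sub>v n"
      proof
        assume "ws ! i = 0\<^sub>v n"
        then have "ws ! i \<bullet>c ws ! i = 0" by simp
        then show False using corthogonalD[OF ws(2), of i i] ws i by auto
      qed
      note pos = hinner_self_pos[OF wsi[OF i] nz]
      show ?thesis using True i pos unfolding nm_def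
        apply (subst pos(2)) 
        apply (simp add: complex_eq_iff)
        done
    next
      case False
      have "ws ! j \<bullet>c ws ! i = 0" using corthogonalD[OF ws(2), of j i] ws i j False by auto
      then show ?thesis using False i j unfolding hinner_def by simp
    qed
    finally show "(mat_adjoint W * W) $$ (i,j) = 1\<^sub>m n $$ (i,j)" .
  qed (use W in auto)
  show ?thesis using W WW col0 by auto
qed


lemma hinner_smult_right: "u \<in> carrier_vec n \<Longrightarrow> v \<in> carrier_vec n \<Longrightarrow>
  hinner u (c \<cdot>\<^sub>v v) = c * hinner u v"
  by (simp add: hinner_sum sum_distrib_left mult.left_commute)

lemma hinner_smult_left: "u \<in> carrier_vec n \<Longrightarrow> v \<in> carrier_vec n \<Longrightarrow>
  hinner (c \<cdot>\<^sub>v u) v = cnj c * hinner u v"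
  by (simp add: hinner_sum sum_distrib_left mult.left_commute mult.assoc)

lemma adj_mult:
  fixes X Y :: "complex mat"
  assumes X: "X \<in> carrier_mat a b" and Y: "Y \<in> carrier_mat b c"
  shows "mat_adjoint (X * Y) = mat_adjoint Y * mat_adjoint X"
proof (rule eq_matI)
  fix i j assume "i < dim_row (mat_adjoint Y * mat_adjoint X)" "j < dim_col (mat_adjoint Y * mat_adjoint X)"
  then have i: "i < c" and j: "j < a" using X Y by auto
  have l: "(mat_adjoint Y * mat_adjoint X) $$ (i,j) = (\<Sum>l\<in>{0..<b}. cnj (Y $$ (l,i)) * cnj (X $$ (j,l)))"
    using X Y i j by (simp add: scalar_prod_def)
  have r: "mat_adjoint (X * Y) $$ (i,j) = cnj (\<Sum>l\<in>{0..<b}. X $$ (j,l) * Y $$ (l,i))"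
    using X Y i j by (simp add: scalar_prod_def)
  show "mat_adjoint (X * Y) $$ (i, j) = (mat_adjoint Y * mat_adjoint X) $$ (i, j)"
    unfolding l r by (simp add: mult.commute)
qed (use X Y in auto)

lemma adj_one[simp]: "mat_adjoint (1\<^sub>m n) = (1\<^sub>m n :: complex mat)"
  by (rule eq_matI) auto

lemma adj_zero[simp]: "mat_adjoint (0\<^sub>m a b) = (0\<^sub>m b a :: complex mat)"
  by (rule eq_matI) auto

lemma adj_four_block:
  fixes A B C D :: "complex mat"
  assumes A: "A \<in> carrier_mat a1 b1" and B: "B \<in> carrier_mat a1 b2" and C: "C \<in> carrier_mat a2 b1" and D: "D \<in> carrier_mat a2 b2"
  shows "mat_adjoint (four_block_mat A B C D) = four_block_mat (mat_adjoint A) (mat_adjoint C) (mat_adjoint B) (mat_adjoint D)"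
proof (rule eq_matI)
  fix i j assume "i < dim_row (four_block_mat (mat_adjoint A) (mat_adjoint C) (mat_adjoint B) (mat_adjoint D))"
    "j < dim_col (four_block_mat (mat_adjoint A) (mat_adjoint C) (mat_adjoint B) (mat_adjoint D))"
  then have i: "i < b1 + b2" and j: "j < a1 + a2" using A D by auto
  have l: "mat_adjoint (four_block_mat A B C D) $$ (i,j) = cnj (four_block_mat A B C D $$ (j,i))"
    using i j A D by simp
  show "mat_adjoint (four_block_mat A B C D) $$ (i, j) =
         four_block_mat (mat_adjoint A) (mat_adjoint C) (mat_adjoint B) (mat_adjoint D) $$ (i, j)"
    unfolding l using i j A B C D by (cases "i < b1"; cases "j < a1") simp_all
qed (use A D in auto)

lemma mult_unit_vec: "(A :: complex mat) \<in> carrier_mat m n \<Longrightarrow> i < n \<Longrightarrow> A *\<^sub>v unit_vec n i = col A i"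
proof (intro eq_vecI)
  fix l assume A: "A \<in> carrier_mat m n" and i: "i < n" and l: "l < dim_vec (col A i)"
  have "(A *\<^sub>v unit_vec n i) $ l = (\<Sum>k\<in>{0..<n}. A $$ (l,k) * (if k = i then 1 else 0))"
    using A i l by (auto simp: scalar_prod_def intro!: sum.cong)
  also have "\<dots> = A $$ (l, i)" using i by (simp add: if_distrib sum.delta' cong: if_cong)
  finally show "(A *\<^sub>v unit_vec n i) $ l = col A i $ l" using A i l by simp
qed auto

lemma schur_unitary:
  fixes A :: "complex mat"
  assumes "A \<in> carrier_mat n n"
  shows "\<exists>U \<in> carrier_mat n n. mat_adjoint U * U = 1\<^sub>m n \<and> upper_triangular (mat_adjoint U * A * U)"
  using assms
proof (induction n arbitrary: A)
  case 0
  then show ?case by (intro bexI[of _ "1\<^sub>m 0"]) (auto simp: upper_triangular_def)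
next
  case (Suc m)
  have A: "A \<in> carrier_mat (Suc m) (Suc m)" by fact
  obtain e v where v: "v \<in> carrier_vec (Suc m)" "v \<noteq> 0\<^sub>v (Suc m)" and ev: "A *\<^sub>v v = e \<cdot>\<^sub>v v"
    using eigen_exists[OF A] by auto
  note pos = hinner_self_pos[OF v]
  define v1 where "v1 = complex_of_real (1 / sqrt (Re (hinner v v))) \<cdot>\<^sub>v v"
  have v1: "v1 \<in> carrier_vec (Suc m)" unfolding v1_def using v by auto
  have v11: "hinner v1 v1 = 1"
  proof -
    define h where "h = Re (hinner v v)"
    have "hinner v1 v1 = cnj (complex_of_real (1 / sqrt h)) * (complex_of_real (1 / sqrt h) * hinner v v)"
      unfolding v1_def h_def using v
      by (simp only: hinner_smult_left[of _ "Suc m"] hinner_smult_right[of _ "Suc m"] smult_carrier_vec mult.left_commute)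
    also have "\<dots> = complex_of_real (1 / sqrt h) * complex_of_real (1 / sqrt h) * hinner v v"
      by (simp only: complex_cnj_complex_of_real mult.assoc)
    also have "\<dots> = complex_of_real (1 / sqrt h * (1 / sqrt h) * h)"
      using pos(2) unfolding h_def by (metis of_real_mult)
    also have "1 / sqrt h * (1 / sqrt h) * h = 1" using pos(1) unfolding h_def[symmetric]
      by (simp add: field_simps flip: power2_eq_square)
    finally show ?thesis by simp
  qed
  have ev1: "A *\<^sub>v v1 = e \<cdot>\<^sub>v v1" unfolding v1_def using A v ev
    by (simp add: mult_mat_vec[of _ "Suc m" "Suc m"] smult_smult_assoc mult.commute)
  obtain W where W: "W \<in> carrier_mat (Suc m) (Suc m)" and WW: "mat_adjoint W * W = 1\<^sub>m (Suc m)"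
    and col0: "col W 0 = v1" using unitary_ext[OF v1 v11] by auto
  have Wh: "mat_adjoint W \<in> carrier_mat (Suc m) (Suc m)" using W by simp
  define A' where "A' = mat_adjoint W * A * W"
  have A': "A' \<in> carrier_mat (Suc m) (Suc m)" unfolding A'_def using W A by auto
  have colA': "col A' 0 = e \<cdot>\<^sub>v unit_vec (Suc m) 0"
  proof -
    have "col A' 0 = (mat_adjoint W * A) *\<^sub>v col W 0" unfolding A'_def
      by (rule col_mult2) (use W A in auto)
    also have "\<dots> = mat_adjoint W *\<^sub>v (A *\<^sub>v v1)" unfolding col0
      by (rule assoc_mult_mat_vec[of _ "Suc m" "Suc m"]) (use Wh A v1 in auto)
    also have "\<dots> = e \<cdot>\<^sub>v (mat_adjoint W *\<^sub>v col W 0)" unfolding ev1 col0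
      using Wh v1 by (simp add: mult_mat_vec[of _ "Suc m" "Suc m"])
    also have "mat_adjoint W *\<^sub>v col W 0 = col (mat_adjoint W * W) 0"
      by (rule col_mult2[symmetric]) (use W in auto)
    finally show ?thesis unfolding WW by simp
  qed
  obtain A1 A2 A0 A3 where sb: "split_block A' 1 1 = (A1,A2,A0,A3)"
    by (cases "split_block A' 1 1") auto
  have dims: "dim_row A' = 1 + m" "dim_col A' = 1 + m" using A' by auto
  note blk = split_block[OF sb dims]
  have A0: "A0 = 0\<^sub>m m 1"
  proof (rule eq_matI)
    fix i j assume ij: "i < dim_row (0\<^sub>m m 1)" "j < dim_col (0\<^sub>m m 1)"
    then have "A' $$ (Suc i, 0) = A0 $$ (i, j)" using blk by (simp add: blk(5))
    moreover have "A' $$ (Suc i, 0) = col A' 0 $ Suc i" using A' ij by simp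
    ultimately show "A0 $$ (i, j) = 0\<^sub>m m 1 $$ (i, j)" unfolding colA' using ij by simp
  qed (use blk in auto)
  obtain U3 where U3: "U3 \<in> carrier_mat m m" and UU3: "mat_adjoint U3 * U3 = 1\<^sub>m m"
    and ut3: "upper_triangular (mat_adjoint U3 * A3 * U3)" using Suc.IH[OF blk(4)] by auto
  define Ub where "Ub = four_block_mat (1\<^sub>m 1) (0\<^sub>m 1 m) (0\<^sub>m m 1) U3"
  have Ub: "Ub \<in> carrier_mat (Suc m) (Suc m)" unfolding Ub_def using U3
    using four_block_carrier_mat[of "1\<^sub>m 1" 1 1 U3 m m] by simp
  have Ubh: "mat_adjoint Ub = four_block_mat (1\<^sub>m 1) (0\<^sub>m 1 m) (0\<^sub>m m 1) (mat_adjoint U3)"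
    unfolding Ub_def using U3 by (subst adj_four_block) auto
  define U where "U = W * Ub"
  have U: "U \<in> carrier_mat (Suc m) (Suc m)" unfolding U_def using W Ub by auto
  have Uh: "mat_adjoint U = mat_adjoint Ub * mat_adjoint W" unfolding U_def by (rule adj_mult[OF W Ub])
  have WhWUb: "mat_adjoint W * (W * Ub) = Ub"
  proof -
    have "mat_adjoint W * (W * Ub) = (mat_adjoint W * W) * Ub"
      by (rule assoc_mult_mat[symmetric]) (use Wh W Ub in auto)
    then show ?thesis unfolding WW using Ub by simp
  qed
  have "mat_adjoint U * U = mat_adjoint Ub * (mat_adjoint W * (W * Ub))"
    unfolding Uh unfolding U_def
    by (rule assoc_mult_mat) (use Wh W Ub in auto)
  also have "\<dots> = mat_adjoint Ub * Ub" unfolding WhWUb ..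
  also have "\<dots> = 1\<^sub>m (Suc m)" unfolding Ubh unfolding Ub_def using U3 UU3
    by (subst mult_four_block_mat[of _ 1 1 _ m _ m _ _ 1 _ m]) auto
  finally have UU: "mat_adjoint U * U = 1\<^sub>m (Suc m)" .
  have "mat_adjoint U * A * U = mat_adjoint Ub * (mat_adjoint W * A * W) * Ub"
  proof -
    have "mat_adjoint U * A * U = mat_adjoint Ub * (mat_adjoint W * A) * (W * Ub)"
      unfolding Uh unfolding U_def
      by (subst assoc_mult_mat[of _ "Suc m" "Suc m" _ "Suc m"]) (use Wh W Ub A in auto)
    also have "\<dots> = mat_adjoint Ub * (mat_adjoint W * A) * W * Ub"
      by (subst assoc_mult_mat[of _ "Suc m" "Suc m" _ "Suc m"]) (use Wh W Ub A in auto)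
    also have "mat_adjoint Ub * (mat_adjoint W * A) * W = mat_adjoint Ub * (mat_adjoint W * A * W)"
      by (rule assoc_mult_mat) (use Wh W Ub A in auto)
    finally show ?thesis .
  qed
  also have "\<dots> = four_block_mat A1 (A2 * U3) (0\<^sub>m m 1) (mat_adjoint U3 * A3 * U3)"
  proof -
    have e1: "mat_adjoint Ub * A' = four_block_mat A1 A2 (0\<^sub>m m 1) (mat_adjoint U3 * A3)"
      unfolding Ubh unfolding blk(5) A0 using U3 blk(1-4) A0
      by (subst mult_four_block_mat[of _ 1 1 _ m _ m _ _ 1 _ m]) auto
    have e2: "four_block_mat A1 A2 (0\<^sub>m m 1) (mat_adjoint U3 * A3) * Ub
       = four_block_mat A1 (A2 * U3) (0\<^sub>m m 1) (mat_adjoint U3 * A3 * U3)"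
      unfolding Ub_def using U3 blk(1-4)
      by (subst mult_four_block_mat[of _ 1 1 _ m _ m _ _ 1 _ m]) auto
    show ?thesis unfolding A'_def[symmetric] e1 e2 ..
  qed
  finally have eq: "mat_adjoint U * A * U = four_block_mat A1 (A2 * U3) (0\<^sub>m m 1) (mat_adjoint U3 * A3 * U3)" .
  have "upper_triangular (mat_adjoint U * A * U)" unfolding eq
    by (rule upper_triangular_four_block[of _ 1 _ m]) (use blk U3 ut3 in \<open>auto simp: upper_triangular_def\<close>)
  then show ?case using U UU by auto
qed




definition dm :: "(nat \<Rightarrow> complex) \<Rightarrow> nat \<Rightarrow> complex mat" where
  "dm f n = mat n n (\<lambda>(i,j). if i = j then f i else 0)"

lemma dm_carrier[simp]: "dm f n \<in> carrier_mat n n" and dm_dims[simp]: "dim_row (dm f n) = n" "dim_col (dm f n) = n"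
  unfolding dm_def by auto

lemma dm_index[simp]: "i < n \<Longrightarrow> j < n \<Longrightarrow> dm f n $$ (i,j) = (if i = j then f i else 0)"
  unfolding dm_def by auto

lemma dm_mult_vec: assumes v: "v \<in> carrier_vec n" shows "dm f n *\<^sub>v v = vec n (\<lambda>i. f i * v $ i)"
proof (rule eq_vecI)
  fix i assume "i < dim_vec (vec n (\<lambda>i. f i * v $ i))"
  then have i: "i < n" by simp
  have "(dm f n *\<^sub>v v) $ i = (\<Sum>k\<in>{0..<n}. (if i = k then f i else 0) * v $ k)"
    using i v by (auto simp: scalar_prod_def intro!: sum.cong)
  also have "\<dots> = (\<Sum>k\<in>{0..<n}. if i = k then f i * v $ k else 0)" by (rule sum.cong) auto
  also have "\<dots> = f i * v $ i" using i by (simp add: sum.delta)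
  finally show "(dm f n *\<^sub>v v) $ i = vec n (\<lambda>i. f i * v $ i) $ i" using i by simp
qed (use v in auto)

lemma dm_mult: "dm f n * dm g n = dm (\<lambda>i. f i * g i) n"
proof (rule eq_matI)
  fix i j assume "i < dim_row (dm (\<lambda>i. f i * g i) n)" "j < dim_col (dm (\<lambda>i. f i * g i) n)"
  then have i: "i < n" and j: "j < n" by auto
  have "(dm f n * dm g n) $$ (i,j) = (\<Sum>k\<in>{0..<n}. (if i = k then f i else 0) * (if k = j then g k else 0))"
    using i j by (auto simp: scalar_prod_def intro!: sum.cong)
  also have "\<dots> = (\<Sum>k\<in>{0..<n}. if i = k then (if k = j then f i * g k else 0) else 0)" by (rule sum.cong) auto
  also have "\<dots> = (if i = j then f i * g i else 0)" using i j by (simp add: sum.delta)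
  finally show "(dm f n * dm g n) $$ (i,j) = dm (\<lambda>i. f i * g i) n $$ (i,j)" using i j by simp
qed auto

lemma dm_adj: "mat_adjoint (dm f n) = dm (\<lambda>i. cnj (f i)) n"
  by (rule eq_matI) auto

lemma hinner_unit: assumes "w \<in> carrier_vec n" "i < n" shows "hinner (unit_vec n i) w = w $ i"
proof -
  have "hinner (unit_vec n i) w = (\<Sum>k<n. cnj (unit_vec n i $ k) * w $ k)" using assms by (simp add: hinner_sum[of _ n])
  also have "\<dots> = (\<Sum>k<n. if k = i then w $ k else 0)" by (rule sum.cong) (auto simp: unit_vec_def)
  also have "\<dots> = w $ i" using assms by simp
  finally show ?thesis .
qed

lemma adj_adj[simp]: "mat_adjoint (mat_adjoint A) = (A :: complex mat)"
  by (rule eq_matI) auto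

lemma hinner_adj:
  assumes A: "A \<in> carrier_mat m n" and u: "u \<in> carrier_vec m" and v: "v \<in> carrier_vec n"
  shows "hinner u (A *\<^sub>v v) = hinner (mat_adjoint A *\<^sub>v u) v"
proof -
  have c: "mat_adjoint A *\<^sub>v u \<in> carrier_vec n" using A u by (intro carrier_vecI) auto
  have "hinner u (A *\<^sub>v v) = (\<Sum>i<m. cnj (u $ i) * (\<Sum>j<n. A $$ (i,j) * v $ j))"
    using A u v by (subst hinner_sum[of _ m]) (auto simp: scalar_prod_def lessThan_atLeast0 intro!: sum.cong)
  also have "\<dots> = (\<Sum>j<n. (\<Sum>i<m. cnj (u $ i) * A $$ (i,j)) * v $ j)"
    by (simp add: sum_distrib_left sum_distrib_right mult.assoc sum.swap[of _ "{..<m}"])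
  also have "\<dots> = hinner (mat_adjoint A *\<^sub>v u) v"
    using A u v c by (subst hinner_sum[of _ n]) (auto simp: scalar_prod_def lessThan_atLeast0 mult.commute intro!: sum.cong)
  finally show ?thesis .
qed

lemma herm_diag:
  fixes T :: "complex mat"
  assumes T: "T \<in> carrier_mat n n" and pd: "pos_def T"
  shows "\<exists>U d. U \<in> carrier_mat n n \<and> mat_adjoint U * U = 1\<^sub>m n \<and> U * mat_adjoint U = 1\<^sub>m n \<and>
     (\<forall>i<n. d i > 0) \<and> mat_adjoint U * T * U = dm (\<lambda>i. complex_of_real (d i)) n"
proof -
  obtain U where U: "U \<in> carrier_mat n n" and UU: "mat_adjoint U * U = 1\<^sub>m n"
    and ut: "upper_triangular (mat_adjoint U * T * U)" using schur_unitary[OF T] by auto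
  have Uh: "mat_adjoint U \<in> carrier_mat n n" using U by simp
  have UU': "U * mat_adjoint U = 1\<^sub>m n" using mat_mult_left_right_inverse[OF Uh U UU] .
  have TT: "mat_adjoint T = T" using pd unfolding pos_def_def hermitian_def by auto
  define D where "D = mat_adjoint U * T * U"
  have D: "D \<in> carrier_mat n n" unfolding D_def using U T by auto
  have DD: "mat_adjoint D = D"
  proof -
    have "mat_adjoint D = mat_adjoint U * mat_adjoint (mat_adjoint U * T)"
      unfolding D_def by (rule adj_mult[of _ n n _ n]) (use U T in auto)
    also have "mat_adjoint (mat_adjoint U * T) = T * U"
      using adj_mult[OF Uh T] TT by simp
    also have "mat_adjoint U * (T * U) = D" unfolding D_def
      by (rule assoc_mult_mat[symmetric]) (use U T in auto)
    finally show ?thesis .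
  qed
  have Dlow: "D $$ (i,j) = 0" if "i < n" "j < n" "i \<noteq> j" for i j
  proof (cases "j < i")
    case True
    then show ?thesis using ut that D unfolding D_def upper_triangular_def by auto
  next
    case False
    then have "i < j" using that by auto
    then have "D $$ (j,i) = 0" using ut that D unfolding D_def upper_triangular_def by auto
    moreover have "D $$ (i,j) = cnj (D $$ (j,i))"
      using arg_cong[OF DD, of "\<lambda>X. X $$ (i,j)"] that D by auto
    ultimately show ?thesis by simp
  qed
  have Ddiag: "D $$ (i,i) = hinner (col U i) (T *\<^sub>v col U i)" if i: "i < n" for i
  proof -
    have cU: "col U i = U *\<^sub>v unit_vec n i" using mult_unit_vec[OF U i] by simp
    have "hinner (col U i) (T *\<^sub>v col U i) = hinner (unit_vec n i) (mat_adjoint U *\<^sub>v (T *\<^sub>v (U *\<^sub>v unit_vec n i)))"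
      unfolding cU using hinner_adj[OF Uh, of "unit_vec n i" "T *\<^sub>v (U *\<^sub>v unit_vec n i)"] U T by simp
    also have "mat_adjoint U *\<^sub>v (T *\<^sub>v (U *\<^sub>v unit_vec n i)) = D *\<^sub>v unit_vec n i"
    proof -
      have "D *\<^sub>v unit_vec n i = (mat_adjoint U * T) *\<^sub>v (U *\<^sub>v unit_vec n i)"
        unfolding D_def by (rule assoc_mult_mat_vec[of _ n n]) (use U Uh T in auto)
      also have "\<dots> = mat_adjoint U *\<^sub>v (T *\<^sub>v (U *\<^sub>v unit_vec n i))"
        by (rule assoc_mult_mat_vec[of _ n n]) (use U Uh T in auto)
      finally show ?thesis by simp
    qed
    also have "\<dots> = col D i" using mult_unit_vec[OF D i] .
    also have "hinner (unit_vec n i) (col D i) = D $$ (i,i)"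
      using hinner_unit[of "col D i" n i] D i by simp
    finally show ?thesis by simp
  qed
  have cnz: "col U i \<noteq> 0\<^sub>v n" if i: "i < n" for i
  proof
    assume z: "col U i = 0\<^sub>v n"
    have "(mat_adjoint U * U) $$ (i,i) = hinner (col U i) (col U i)" by (rule adj_mult_index[OF U i i])
    then have "hinner (0\<^sub>v n) (0\<^sub>v n) = 1" using UU i unfolding z by simp
    moreover have "hinner (0\<^sub>v n) (0\<^sub>v n) = (0::complex)" by (simp add: hinner_sum[of _ n])
    ultimately show False by simp
  qed
  define d where "d i = Re (D $$ (i,i))" for i
  have dpos: "d i > 0" if i: "i < n" for i
    using pd cnz[OF i] U i unfolding d_def Ddiag[OF i] pos_def_def using T by auto
  have dreal: "D $$ (i,i) = complex_of_real (d i)" if i: "i < n" for i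
  proof -
    have "D $$ (i,i) = cnj (D $$ (i,i))"
      using arg_cong[OF DD, of "\<lambda>X. X $$ (i,i)"] i D by auto
    then show ?thesis unfolding d_def by (simp add: complex_eq_iff)
  qed
  have "D = dm (\<lambda>i. complex_of_real (d i)) n"
    by (rule eq_matI) (use D Dlow dreal in auto)
  then show ?thesis using U UU UU' dpos unfolding D_def by blast
qed


lemma vec_diff_zero: assumes "x \<in> carrier_vec n" "y \<in> carrier_vec n" "x - y = 0\<^sub>v n" shows "x = (y :: complex vec)"
proof (rule eq_vecI)
  fix i assume i: "i < dim_vec y"
  have "x $ i - y $ i = (x - y) $ i" using assms(1,2) i by simp
  also have "\<dots> = 0" unfolding assms(3) using assms i by simp
  finally show "x $ i = y $ i" by simp
qed (use assms in auto)

lemma mat_eq_cols: assumes "A \<in> carrier_mat m n" "B \<in> carrier_mat m n" "\<And>i. i < n \<Longrightarrow> col A i = col B i"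
  shows "A = B"
proof (rule eq_matI)
  fix i j assume "i < dim_row B" "j < dim_col B"
  then show "A $$ (i,j) = B $$ (i,j)" using assms(3)[of j] assms(1,2)
    by (metis carrier_matD index_col)
qed (use assms in auto)

lemma sqrt_eigen:
  fixes S T :: "complex mat"
  assumes S: "S \<in> carrier_mat n n" "pos_def S" "S * S = T" and u: "u \<in> carrier_vec n"
    and Tu: "T *\<^sub>v u = complex_of_real (c^2) \<cdot>\<^sub>v u" and c: "c > 0"
  shows "S *\<^sub>v u = complex_of_real c \<cdot>\<^sub>v u"
proof -
  define w where "w = S *\<^sub>v u - complex_of_real c \<cdot>\<^sub>v u"
  have w: "w \<in> carrier_vec n" unfolding w_def using S u by auto
  have SSu: "S *\<^sub>v (S *\<^sub>v u) = T *\<^sub>v u" unfolding S(3)[symmetric]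
    by (rule assoc_mult_mat_vec[symmetric]) (use S u in auto)
  have Sw: "S *\<^sub>v w = (- complex_of_real c) \<cdot>\<^sub>v w"
  proof -
    have "S *\<^sub>v w = S *\<^sub>v (S *\<^sub>v u) - complex_of_real c \<cdot>\<^sub>v (S *\<^sub>v u)"
      unfolding w_def using S u by (simp add: mult_minus_distrib_mat_vec[of _ n n] mult_mat_vec[of _ n n])
    also have "\<dots> = (- complex_of_real c) \<cdot>\<^sub>v w" unfolding SSu Tu w_def
      by (rule eq_vecI) (use S u in \<open>auto simp: algebra_simps power2_eq_square\<close>)
    finally show ?thesis .
  qed
  have "w = 0\<^sub>v n"
  proof (rule ccontr)
    assume nz: "w \<noteq> 0\<^sub>v n"
    have "Re (hinner w (S *\<^sub>v w)) > 0" using S(2) nz w S(1) unfolding pos_def_def by auto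
    moreover have "hinner w (S *\<^sub>v w) = complex_of_real (- c * Re (hinner w w))"
      unfolding Sw using hinner_smult_right[OF w w] hinner_self_pos[OF w nz]
      by (metis mult_minus_left of_real_minus of_real_mult)
    moreover have "Re (hinner w w) > 0" using hinner_self_pos[OF w nz] by simp
    ultimately have "c * Re (hinner w w) < 0" by simp
    moreover have "c * Re (hinner w w) > 0" using c \<open>Re (hinner w w) > 0\<close> by simp
    ultimately show False by simp
  qed
  then show ?thesis unfolding w_def using vec_diff_zero[of "S *\<^sub>v u" n] S u by auto
qed


lemma dm_cong: "(\<And>i. i < n \<Longrightarrow> f i = g i) \<Longrightarrow> dm f n = dm g n"
  by (rule eq_matI) auto

lemma dm_mult_assoc: "Z \<in> carrier_mat n k \<Longrightarrow> dm f n * (dm g n * Z) = dm (\<lambda>i. f i * g i) n * Z"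
  by (subst assoc_mult_mat[symmetric, of _ n n _ n]) (auto simp: dm_mult)

lemma col_dm: assumes U: "U \<in> carrier_mat m n" and i: "i < n" shows "col (U * dm f n) i = f i \<cdot>\<^sub>v col U i"
proof (rule eq_vecI)
  fix j assume "j < dim_vec (f i \<cdot>\<^sub>v col U i)"
  then have j: "j < m" using U by simp
  have "col (U * dm f n) i $ j = (\<Sum>k\<in>{0..<n}. U $$ (j,k) * (if k = i then f k else 0))"
    using U i j by (auto simp: scalar_prod_def intro!: sum.cong)
  also have "\<dots> = (\<Sum>k\<in>{0..<n}. if k = i then U $$ (j,k) * f k else 0)" by (rule sum.cong) auto
  also have "\<dots> = f i * U $$ (j,i)" using i by (simp add: sum.delta mult.commute)
  finally show "col (U * dm f n) i $ j = (f i \<cdot>\<^sub>v col U i) $ j" using U i j by simp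
qed (use U i in auto)

lemma assoc6:
  assumes "A \<in> carrier_mat n n" "B \<in> carrier_mat n n" "C \<in> carrier_mat n n" "D \<in> carrier_mat n n" "E \<in> carrier_mat n n" "F \<in> carrier_mat n n"
  shows "(A * (B * C)) * (D * (E * F)) = A * (B * (C * (D * (E * (F :: complex mat)))))"
proof -
  have "(A * (B * C)) * (D * (E * F)) = A * ((B * C) * (D * (E * F)))"
    by (rule assoc_mult_mat) (use assms in auto)
  also have "(B * C) * (D * (E * F)) = B * (C * (D * (E * F)))"
    by (rule assoc_mult_mat) (use assms in auto)
  finally show ?thesis .
qed

lemma psqrt_props:
  fixes T :: "complex mat"
  assumes T: "T \<in> carrier_mat n n" and pd: "pos_def T"
  shows "psqrt T \<in> carrier_mat n n \<and> mat_adjoint (psqrt T) = psqrt T \<and> psqrt T * psqrt T = T \<and>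
    psqrt_inv T \<in> carrier_mat n n \<and> psqrt_inv T * psqrt T = 1\<^sub>m n \<and> psqrt T * psqrt_inv T = 1\<^sub>m n"
proof -
  obtain U d where U: "U \<in> carrier_mat n n" and UU: "mat_adjoint U * U = 1\<^sub>m n" and UU': "U * mat_adjoint U = 1\<^sub>m n"
    and dpos: "\<And>i. i < n \<Longrightarrow> d i > 0" and D: "mat_adjoint U * T * U = dm (\<lambda>i. complex_of_real (d i)) n"
    using herm_diag[OF T pd] by blast
  define Uh where "Uh = mat_adjoint U"
  have Uh: "Uh \<in> carrier_mat n n" unfolding Uh_def using U by simp
  have c1: "Uh * (U * Z) = Z" if "Z \<in> carrier_mat n k" for Z k
    using that U Uh UU unfolding Uh_def by (simp flip: assoc_mult_mat[of _ n n _ n])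
  have c2: "U * (Uh * Z) = Z" if "Z \<in> carrier_mat n k" for Z k
    using that U Uh UU' unfolding Uh_def by (simp flip: assoc_mult_mat[of _ n n _ n])
  define Dd where "Dd = dm (\<lambda>i. complex_of_real (d i)) n"
  define Ds where "Ds = dm (\<lambda>i. complex_of_real (sqrt (d i))) n"
  define Dsi where "Dsi = dm (\<lambda>i. complex_of_real (1 / sqrt (d i))) n"
  have Dd: "Dd \<in> carrier_mat n n" and Ds: "Ds \<in> carrier_mat n n" and Dsi: "Dsi \<in> carrier_mat n n"
    unfolding Dd_def Ds_def Dsi_def by auto
  have DsDs: "Ds * (Ds * Z) = Dd * Z" if "Z \<in> carrier_mat n k" for Z k
  proof -
    have "Ds * (Ds * Z) = dm (\<lambda>i. complex_of_real (sqrt (d i)) * complex_of_real (sqrt (d i))) n * Z"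
      unfolding Ds_def using that by (rule dm_mult_assoc)
    also have "dm (\<lambda>i. complex_of_real (sqrt (d i)) * complex_of_real (sqrt (d i))) n = Dd"
      unfolding Dd_def by (rule dm_cong) (use dpos in \<open>force simp flip: of_real_mult\<close>)
    finally show ?thesis .
  qed
  have DsiDs: "Dsi * (Ds * Z) = Z" "Ds * (Dsi * Z) = Z" if "Z \<in> carrier_mat n k" for Z k
  proof -
    have "Dsi * (Ds * Z) = dm (\<lambda>i. complex_of_real (1 / sqrt (d i)) * complex_of_real (sqrt (d i))) n * Z"
      unfolding Ds_def Dsi_def using that by (rule dm_mult_assoc)
    also have "dm (\<lambda>i. complex_of_real (1 / sqrt (d i)) * complex_of_real (sqrt (d i))) n = 1\<^sub>m n"
      by (rule eq_matI) (use dpos in \<open>force simp flip: of_real_mult\<close>)+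
    finally show "Dsi * (Ds * Z) = Z" using that by simp
    have "Ds * (Dsi * Z) = dm (\<lambda>i. complex_of_real (sqrt (d i)) * complex_of_real (1 / sqrt (d i))) n * Z"
      unfolding Ds_def Dsi_def using that by (rule dm_mult_assoc)
    also have "dm (\<lambda>i. complex_of_real (sqrt (d i)) * complex_of_real (1 / sqrt (d i))) n = 1\<^sub>m n"
      by (rule eq_matI) (use dpos in \<open>force simp flip: of_real_mult\<close>)+
    finally show "Ds * (Dsi * Z) = Z" using that by simp
  qed
  have TU: "T = U * (Dd * Uh)"
  proof -
    have "Dd * Uh = (Uh * T) * (U * Uh)"
      unfolding Dd_def D[symmetric] Uh_def[symmetric] by (rule assoc_mult_mat[of _ n n _ n _ n]) (use U Uh T in auto)
    also have "\<dots> = Uh * (T * (U * Uh))" by (rule assoc_mult_mat[of _ n n _ n _ n]) (use U Uh T in auto)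
    finally have "U * (Dd * Uh) = U * (Uh * (T * (U * Uh)))" by simp
    also have "T * (U * Uh) = T" using UU' T unfolding Uh_def by simp
    also have "U * (Uh * T) = T" using c2[of T n] T by simp
    finally show ?thesis by simp
  qed
  define S0 where "S0 = U * (Ds * Uh)"
  define Si0 where "Si0 = U * (Dsi * Uh)"
  have S0: "S0 \<in> carrier_mat n n" unfolding S0_def using U Ds Uh by simp
  have Si0: "Si0 \<in> carrier_mat n n" unfolding Si0_def using U Dsi Uh by simp
  have S0S0: "S0 * S0 = T"
  proof -
    have "S0 * S0 = U * (Ds * (Uh * (U * (Ds * Uh))))" unfolding S0_def using U Ds Uh U Ds Uh by (rule assoc6)
    also have "\<dots> = U * (Ds * (Ds * Uh))" using c1[of "Ds * Uh" n] mult_carrier_mat[OF Ds Uh] by simp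
    also have "\<dots> = T" unfolding TU using DsDs[of Uh] Uh by simp
    finally show ?thesis .
  qed
  have SiS: "Si0 * S0 = 1\<^sub>m n"
  proof -
    have "Si0 * S0 = U * (Dsi * (Uh * (U * (Ds * Uh))))" unfolding S0_def Si0_def using U Dsi Uh U Ds Uh by (rule assoc6)
    also have "\<dots> = U * (Dsi * (Ds * Uh))" using c1[of "Ds * Uh" n] mult_carrier_mat[OF Ds Uh] by simp
    also have "\<dots> = 1\<^sub>m n" using DsiDs(1)[of Uh] Uh UU' unfolding Uh_def by simp
    finally show ?thesis .
  qed
  have SSi: "S0 * Si0 = 1\<^sub>m n"
  proof -
    have "S0 * Si0 = U * (Ds * (Uh * (U * (Dsi * Uh))))" unfolding S0_def Si0_def using U Ds Uh U Dsi Uh by (rule assoc6)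
    also have "\<dots> = U * (Ds * (Dsi * Uh))" using c1[of "Dsi * Uh" n] mult_carrier_mat[OF Dsi Uh] by simp
    also have "\<dots> = 1\<^sub>m n" using DsiDs(2)[of Uh] Uh UU' unfolding Uh_def by simp
    finally show ?thesis .
  qed
  have S0h: "mat_adjoint S0 = S0"
  proof -
    have "mat_adjoint S0 = mat_adjoint (Ds * Uh) * mat_adjoint U" unfolding S0_def
      by (rule adj_mult[of _ n n _ n]) (use U Ds Uh in auto)
    also have "mat_adjoint (Ds * Uh) = mat_adjoint Uh * mat_adjoint Ds"
      by (rule adj_mult[of _ n n _ n]) (use Ds Uh in auto)
    also have "mat_adjoint Ds = Ds" unfolding Ds_def dm_adj by simp
    also have "mat_adjoint Uh = U" unfolding Uh_def by simp
    also have "U * Ds * mat_adjoint U = S0" unfolding S0_def Uh_def by (rule assoc_mult_mat) (use U Ds Uh in \<open>auto simp: Uh_def\<close>)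
    finally show ?thesis .
  qed
  have S0pd: "pos_def S0"
    unfolding pos_def_def hermitian_def
  proof (intro conjI ballI impI)
    show "square_mat S0" using S0 by auto
    show "mat_adjoint S0 = S0" by fact
    fix x :: "complex vec" assume x: "x \<in> carrier_vec (dim_row S0)" and nz: "x \<noteq> 0\<^sub>v (dim_row S0)"
    then have x: "x \<in> carrier_vec n" and nz: "x \<noteq> 0\<^sub>v n" using S0 by auto
    define y where "y = Uh *\<^sub>v x"
    have y: "y \<in> carrier_vec n" unfolding y_def using Uh x by auto
    have ynz: "y \<noteq> 0\<^sub>v n"
    proof
      assume "y = 0\<^sub>v n"
      then have "U *\<^sub>v y = 0\<^sub>v n" using U by auto
      moreover have "U *\<^sub>v y = x" unfolding y_def using U Uh x UU' unfolding Uh_def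
        by (simp flip: assoc_mult_mat_vec[of _ n n _ n])
      ultimately show False using nz by simp
    qed
    then obtain i where i: "i < n" and yi: "y $ i \<noteq> 0" using y by (metis eq_vecI carrier_vecD index_zero_vec(1,2))
    have "S0 *\<^sub>v x = U *\<^sub>v ((Ds * Uh) *\<^sub>v x)" unfolding S0_def
      by (rule assoc_mult_mat_vec) (use U Ds Uh x mult_carrier_mat[OF Ds Uh] in auto)
    also have "(Ds * Uh) *\<^sub>v x = Ds *\<^sub>v y" unfolding y_def
      by (rule assoc_mult_mat_vec) (use U Ds Uh x in auto)
    finally have "S0 *\<^sub>v x = U *\<^sub>v (Ds *\<^sub>v y)" .
    then have "hinner x (S0 *\<^sub>v x) = hinner y (Ds *\<^sub>v y)"
      using hinner_adj[OF U x, of "Ds *\<^sub>v y"] Ds y unfolding y_def Uh_def by simp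
    also have "\<dots> = (\<Sum>k<n. complex_of_real (sqrt (d k) * (cmod (y $ k))^2))"
    proof -
      have "hinner y (Ds *\<^sub>v y) = (\<Sum>k<n. cnj (y $ k) * (complex_of_real (sqrt (d k)) * y $ k))"
        unfolding Ds_def dm_mult_vec[OF y] using y by (auto simp: hinner_sum[of _ n] intro!: sum.cong)
      also have "\<dots> = (\<Sum>k<n. complex_of_real (sqrt (d k) * (cmod (y $ k))^2))"
      proof (rule sum.cong[OF refl])
        fix k
        show "cnj (y $ k) * (complex_of_real (sqrt (d k)) * y $ k) = complex_of_real (sqrt (d k) * (cmod (y $ k))^2)"
          by (subst of_real_mult, subst complex_norm_square) (simp add: mult_ac)
      qed
      finally show ?thesis .
    qed
    finally have "Re (hinner x (S0 *\<^sub>v x)) = (\<Sum>k<n. sqrt (d k) * (cmod (y $ k))^2)"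
      by simp
    also have "\<dots> > 0"
    proof (rule sum_pos2[of "{..<n}" i])
      show "0 < sqrt (d i) * (cmod (y $ i))\<^sup>2" using dpos[OF i] yi by simp
    qed (use i in \<open>auto intro!: mult_nonneg_nonneg less_imp_le[OF dpos]\<close>)
    finally show "Re (hinner x (S0 *\<^sub>v x)) > 0" .
  qed
  have uniq: "S' = S0" if S': "S' \<in> carrier_mat n n" "pos_def S'" "S' * S' = T" for S'
  proof -
    have TUc: "T * U = U * Dd"
    proof -
      have "T * U = U * ((Dd * Uh) * U)" unfolding TU
        by (rule assoc_mult_mat) (use U Dd Uh mult_carrier_mat[OF Dd Uh] in auto)
      also have "(Dd * Uh) * U = Dd * (Uh * U)" by (rule assoc_mult_mat) (use U Dd Uh in auto)
      also have "Uh * U = 1\<^sub>m n" unfolding Uh_def by (rule UU)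
      finally show ?thesis using Dd by simp
    qed
    have SU: "S' * U = U * Ds"
    proof (rule mat_eq_cols[of _ n n])
      fix i assume i: "i < n"
      have "T *\<^sub>v col U i = col (T * U) i" by (rule col_mult2[symmetric]) (use T U i in auto)
      also have "\<dots> = complex_of_real ((sqrt (d i))^2) \<cdot>\<^sub>v col U i"
        unfolding TUc Dd_def using col_dm[OF U i] dpos[OF i] by simp
      finally have "S' *\<^sub>v col U i = complex_of_real (sqrt (d i)) \<cdot>\<^sub>v col U i"
        using sqrt_eigen[OF S', of "col U i" "sqrt (d i)"] U i dpos[OF i] by simp
      moreover have "col (S' * U) i = S' *\<^sub>v col U i" by (rule col_mult2) (use S' U i in auto)
      ultimately show "col (S' * U) i = col (U * Ds) i"
        unfolding Ds_def col_dm[OF U i] by simp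
    qed (use S' U Ds in auto)
    have "S' = S' * (U * Uh)" using UU' S' unfolding Uh_def by simp
    also have "\<dots> = (S' * U) * Uh" using S' U Uh by simp
    also have "\<dots> = S0" unfolding SU S0_def using U Ds Uh by simp
    finally show ?thesis .
  qed
  have ps: "psqrt T = S0"
    unfolding psqrt_def
  proof (rule the_equality)
    show "S0 \<in> carrier_mat (dim_row T) (dim_row T) \<and> pos_def S0 \<and> S0 * S0 = T"
      using T S0 S0pd S0S0 by simp
    fix S' assume a: "S' \<in> carrier_mat (dim_row T) (dim_row T) \<and> pos_def S' \<and> S' * S' = T"
    then have "S' \<in> carrier_mat n n" using T by simp
    then show "S' = S0" using uniq a by blast
  qed
  have uniq2: "X = Si0" if "X \<in> carrier_mat n n" "X * S0 = 1\<^sub>m n" "S0 * X = 1\<^sub>m n" for X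
  proof -
    have "X = X * (S0 * Si0)" using SSi that by simp
    also have "\<dots> = (X * S0) * Si0" by (rule assoc_mult_mat[symmetric]) (use that S0 Si0 in auto)
    also have "\<dots> = Si0" unfolding that(2) using Si0 by simp
    finally show ?thesis .
  qed
  have psi: "psqrt_inv T = Si0"
    unfolding psqrt_inv_def ps
  proof (rule the_equality)
    show "Si0 \<in> carrier_mat (dim_row T) (dim_row T) \<and> Si0 * S0 = 1\<^sub>m (dim_row T) \<and> S0 * Si0 = 1\<^sub>m (dim_row T)"
      using T Si0 SiS SSi by simp
    fix X assume a: "X \<in> carrier_mat (dim_row T) (dim_row T) \<and> X * S0 = 1\<^sub>m (dim_row T) \<and> S0 * X = 1\<^sub>m (dim_row T)"
    then have "X \<in> carrier_mat n n" "X * S0 = 1\<^sub>m n" "S0 * X = 1\<^sub>m n" using T by auto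
    then show "X = Si0" by (rule uniq2)
  qed
  show ?thesis unfolding ps psi using S0 S0h S0S0 Si0 SiS SSi by auto
qed




lemma adj_mult_vec_carrier[simp]: "A \<in> carrier_mat m n \<Longrightarrow> u \<in> carrier_vec m \<Longrightarrow> mat_adjoint A *\<^sub>v u \<in> carrier_vec n"
  by (rule carrier_vecI) auto

lemma hinner_add_right: "u \<in> carrier_vec n \<Longrightarrow> v \<in> carrier_vec n \<Longrightarrow> w \<in> carrier_vec n \<Longrightarrow>
  hinner u (v + w) = hinner u v + hinner u w"
  by (simp add: hinner_sum distrib_left sum.distrib)

lemma hinner_minus_right: "u \<in> carrier_vec n \<Longrightarrow> v \<in> carrier_vec n \<Longrightarrow> w \<in> carrier_vec n \<Longrightarrow>
  hinner u (v - w) = hinner u v - hinner u w"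
  by (simp add: hinner_sum right_diff_distrib sum_subtractf)

lemma hinner_self_0: "u \<in> carrier_vec n \<Longrightarrow> hinner u u = 0 \<longleftrightarrow> u = 0\<^sub>v n"
  unfolding hinner_def by (rule conjugate_square_eq_0_vec)

lemma hinner_iso:
  assumes V: "V \<in> carrier_mat n k" "mat_adjoint V * V = 1\<^sub>m k" and a: "a \<in> carrier_vec k" and b: "b \<in> carrier_vec k"
  shows "hinner (V *\<^sub>v a) (V *\<^sub>v b) = hinner a b"
proof -
  have "hinner (V *\<^sub>v a) (V *\<^sub>v b) = hinner (mat_adjoint V *\<^sub>v (V *\<^sub>v a)) b"
    using V a b by (intro hinner_adj[of _ n k]) auto
  also have "mat_adjoint V *\<^sub>v (V *\<^sub>v a) = a"
    using V a by (simp flip: assoc_mult_mat_vec[of _ k n _ k])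
  finally show ?thesis .
qed


lemma mult_mat_vec_uminus: "A \<in> carrier_mat m n \<Longrightarrow> v \<in> carrier_vec n \<Longrightarrow> A *\<^sub>v (- v) = - (A *\<^sub>v (v :: complex vec))"
  by (intro eq_vecI) (auto simp: scalar_prod_def sum_negf)

lemma hinner_cnj: "u \<in> carrier_vec n \<Longrightarrow> v \<in> carrier_vec n \<Longrightarrow> hinner u v = cnj (hinner v u)"
  by (simp add: hinner_sum mult.commute)

lemma cg_inv:
  fixes Al T S Si V :: "complex mat"
  assumes Al: "Al \<in> carrier_mat n n" "mat_adjoint Al = Al"
    and T: "T \<in> carrier_mat n n" and S: "S \<in> carrier_mat n n" "mat_adjoint S = S" "S * S = T"
    and Si: "Si \<in> carrier_mat n n" "Si * S = 1\<^sub>m n" "S * Si = 1\<^sub>m n"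
    and V: "V \<in> carrier_mat n k" "mat_adjoint V * V = 1\<^sub>m k"
    and PB: "\<And>z. z \<in> carrier_vec n \<Longrightarrow> V *\<^sub>v (mat_adjoint V *\<^sub>v (S *\<^sub>v (Al *\<^sub>v (S *\<^sub>v z)))) = S *\<^sub>v (Al *\<^sub>v (S *\<^sub>v z))"
    and BP: "\<And>z. z \<in> carrier_vec n \<Longrightarrow> S *\<^sub>v (Al *\<^sub>v (S *\<^sub>v (V *\<^sub>v (mat_adjoint V *\<^sub>v z)))) = S *\<^sub>v (Al *\<^sub>v (S *\<^sub>v z))"
    and x0: "x0 \<in> carrier_vec n"
    and Bt: "Bt = mat_adjoint V * (S * Al * S) * V"
    and y0: "y0 = mat_adjoint V *\<^sub>v (Si *\<^sub>v x0)"
  shows "case pcg Al T x0 i of (x,r,g,p) \<Rightarrow> (case cg Bt y0 i of (y,\<rho>,q) \<Rightarrow>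
     x \<in> carrier_vec n \<and> r \<in> carrier_vec n \<and> p \<in> carrier_vec n \<and> y \<in> carrier_vec k \<and> \<rho> \<in> carrier_vec k \<and> q \<in> carrier_vec k \<and>
     mat_adjoint V *\<^sub>v (Si *\<^sub>v x) = y \<and> S *\<^sub>v r = V *\<^sub>v \<rho> \<and> Si *\<^sub>v p = V *\<^sub>v q \<and> g = hinner \<rho> \<rho> \<and>
     hinner (Al *\<^sub>v p) p = hinner q (Bt *\<^sub>v q))"
proof -
  let ?Vh = "mat_adjoint V"
  have Vh: "?Vh \<in> carrier_mat k n" using V by auto
  have Bt_c: "Bt \<in> carrier_mat k k" unfolding Bt using V S Al by auto
  have Btv: "Bt *\<^sub>v z = mat_adjoint V *\<^sub>v (S *\<^sub>v (Al *\<^sub>v (S *\<^sub>v (V *\<^sub>v z))))" if z: "z \<in> carrier_vec k" for z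
  proof -
    have "Bt *\<^sub>v z = (mat_adjoint V * (S * Al * S)) *\<^sub>v (V *\<^sub>v z)"
      unfolding Bt by (rule assoc_mult_mat_vec[of _ k n]) (use V S Al z in auto)
    also have "\<dots> = mat_adjoint V *\<^sub>v ((S * Al * S) *\<^sub>v (V *\<^sub>v z))"
      by (rule assoc_mult_mat_vec[of _ k n]) (use V S Al z in auto)
    also have "(S * Al * S) *\<^sub>v (V *\<^sub>v z) = (S * Al) *\<^sub>v (S *\<^sub>v (V *\<^sub>v z))"
      by (rule assoc_mult_mat_vec[of _ n n]) (use V S Al z in auto)
    also have "\<dots> = S *\<^sub>v (Al *\<^sub>v (S *\<^sub>v (V *\<^sub>v z)))"
      by (rule assoc_mult_mat_vec[of _ n n]) (use V S Al z in auto)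
    finally show ?thesis .
  qed
  have SSi: "S *\<^sub>v (Si *\<^sub>v z) = z" if "z \<in> carrier_vec n" for z
    using that S Si by (simp flip: assoc_mult_mat_vec[of _ n n _ n])
  have SiS: "Si *\<^sub>v (S *\<^sub>v z) = z" if "z \<in> carrier_vec n" for z
    using that S Si by (simp flip: assoc_mult_mat_vec[of _ n n _ n])
  have VhV: "?Vh *\<^sub>v (V *\<^sub>v z) = z" if "z \<in> carrier_vec k" for z
    using that V by (simp flip: assoc_mult_mat_vec[of _ k n _ k])
  have SiT: "Si *\<^sub>v (T *\<^sub>v z) = S *\<^sub>v z" if z: "z \<in> carrier_vec n" for z
  proof -
    have "T *\<^sub>v z = S *\<^sub>v (S *\<^sub>v z)" unfolding S(3)[symmetric]
      by (rule assoc_mult_mat_vec[of _ n n]) (use S z in auto)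
    then show ?thesis using SiS[of "S *\<^sub>v z"] S z by simp
  qed
  have gT: "hinner (T *\<^sub>v z) z = hinner (S *\<^sub>v z) (S *\<^sub>v z)" if z: "z \<in> carrier_vec n" for z
  proof -
    have "T *\<^sub>v z = S *\<^sub>v (S *\<^sub>v z)" unfolding S(3)[symmetric]
      by (rule assoc_mult_mat_vec[of _ n n]) (use S z in auto)
    moreover have "hinner (S *\<^sub>v z) (S *\<^sub>v z) = hinner (mat_adjoint S *\<^sub>v (S *\<^sub>v z)) z"
      by (rule hinner_adj[of _ n n]) (use S z in auto)
    ultimately show ?thesis using S by simp
  qed
  have Bq: "hinner (Al *\<^sub>v p) p = hinner q (Bt *\<^sub>v q)" if p: "p \<in> carrier_vec n" and q: "q \<in> carrier_vec k"
     and pq: "Si *\<^sub>v p = V *\<^sub>v q" for p q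
  proof -
    have "hinner q (Bt *\<^sub>v q) = hinner q (?Vh *\<^sub>v (S *\<^sub>v (Al *\<^sub>v (S *\<^sub>v (V *\<^sub>v q)))))"
      using Btv q by simp
    also have "\<dots> = hinner (V *\<^sub>v q) (S *\<^sub>v (Al *\<^sub>v (S *\<^sub>v (V *\<^sub>v q))))"
      using hinner_adj[OF Vh q, of "S *\<^sub>v (Al *\<^sub>v (S *\<^sub>v (V *\<^sub>v q)))"] V S Al q by simp
    also have "S *\<^sub>v (V *\<^sub>v q) = p" using pq SSi p by metis
    also have "hinner (V *\<^sub>v q) (S *\<^sub>v (Al *\<^sub>v p)) = hinner (S *\<^sub>v (V *\<^sub>v q)) (Al *\<^sub>v p)"
      using hinner_adj[OF S(1), of "V *\<^sub>v q" "Al *\<^sub>v p"] V S Al q p by simp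
    also have "S *\<^sub>v (V *\<^sub>v q) = p" using pq SSi p by metis
    also have "hinner p (Al *\<^sub>v p) = hinner (Al *\<^sub>v p) p"
      using hinner_adj[OF Al(1) p p] Al by simp
    finally show ?thesis by simp
  qed
  show ?thesis
  proof (induction i)
    case 0
    define r where "r = - (Al *\<^sub>v x0)"
    define \<rho> where "\<rho> = - (Bt *\<^sub>v y0)"
    have r: "r \<in> carrier_vec n" unfolding r_def using Al x0 by auto
    have y0c: "y0 \<in> carrier_vec k" unfolding y0 using Si V x0 by auto
    have rho: "\<rho> \<in> carrier_vec k" unfolding \<rho>_def using Bt_c y0c by auto
    have sx: "Si *\<^sub>v x0 \<in> carrier_vec n" using Si x0 by auto
    have e1: "Bt *\<^sub>v y0 = ?Vh *\<^sub>v (S *\<^sub>v (Al *\<^sub>v (S *\<^sub>v (V *\<^sub>v (?Vh *\<^sub>v (Si *\<^sub>v x0))))))"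
      unfolding y0 by (rule Btv) (use V Si x0 in auto)
    have e2: "Bt *\<^sub>v y0 = ?Vh *\<^sub>v (S *\<^sub>v (Al *\<^sub>v x0))"
      unfolding e1 BP[OF sx] SSi[OF x0] ..
    have Sr: "S *\<^sub>v r = - (S *\<^sub>v (Al *\<^sub>v x0))"
      unfolding r_def using S Al x0 by (intro mult_mat_vec_uminus) auto
    have Srho: "S *\<^sub>v r = V *\<^sub>v \<rho>"
    proof -
      have "V *\<^sub>v \<rho> = - (V *\<^sub>v (?Vh *\<^sub>v (S *\<^sub>v (Al *\<^sub>v (S *\<^sub>v (Si *\<^sub>v x0))))))"
        unfolding \<rho>_def e2 SSi[OF x0] using V Vh S Al x0 by (intro mult_mat_vec_uminus) auto
      also have "\<dots> = - (S *\<^sub>v (Al *\<^sub>v x0))" using PB[OF sx] SSi[OF x0] by simp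
      finally show ?thesis using Sr by simp
    qed
    have p: "Si *\<^sub>v (T *\<^sub>v r) = V *\<^sub>v \<rho>" using SiT[OF r] Srho by simp
    have g: "hinner (T *\<^sub>v r) r = hinner \<rho> \<rho>"
      using gT[OF r] Srho hinner_iso[OF V rho rho] by simp
    have Tr: "T *\<^sub>v r \<in> carrier_vec n" using T r by auto
    show ?case using r rho y0c x0 Srho p g Tr Bq[OF Tr rho p]
      by (simp add: r_def[symmetric] \<rho>_def[symmetric] Let_def y0[symmetric])
  next
    case (Suc i)
    obtain x r g p where pc: "pcg Al T x0 i = (x,r,g,p)" by (cases "pcg Al T x0 i") auto
    obtain y \<rho> q where cc: "cg Bt y0 i = (y,\<rho>,q)" by (cases "cg Bt y0 i") auto
    from Suc[unfolded pc cc split] have x: "x \<in> carrier_vec n" and r: "r \<in> carrier_vec n"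
      and p: "p \<in> carrier_vec n" and y: "y \<in> carrier_vec k" and rho: "\<rho> \<in> carrier_vec k"
      and q: "q \<in> carrier_vec k" and xy: "?Vh *\<^sub>v (Si *\<^sub>v x) = y" and Sr: "S *\<^sub>v r = V *\<^sub>v \<rho>"
      and pq: "Si *\<^sub>v p = V *\<^sub>v q" and g: "g = hinner \<rho> \<rho>" and den: "hinner (Al *\<^sub>v p) p = hinner q (Bt *\<^sub>v q)"
      by auto
    define w where "w = Al *\<^sub>v p"
    define \<delta> where "\<delta> = g / hinner w p"
    define r' where "r' = r - \<delta> \<cdot>\<^sub>v w"
    define g' where "g' = hinner (T *\<^sub>v r') r'"
    define p' where "p' = T *\<^sub>v r' + (g' / g) \<cdot>\<^sub>v p"
    define \<rho>' where "\<rho>' = \<rho> - \<delta> \<cdot>\<^sub>v (Bt *\<^sub>v q)"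
    define q' where "q' = \<rho>' + (hinner \<rho>' \<rho>' / hinner \<rho> \<rho>) \<cdot>\<^sub>v q"
    have alpha: "hinner \<rho> \<rho> / hinner q (Bt *\<^sub>v q) = \<delta>" unfolding \<delta>_def w_def g den ..
    have pcS: "pcg Al T x0 (Suc i) = (x + \<delta> \<cdot>\<^sub>v p, r', g', p')"
      by (simp add: pc Let_def w_def[symmetric] \<delta>_def[symmetric] r'_def[symmetric] g'_def[symmetric] p'_def[symmetric])
    have ccS: "cg Bt y0 (Suc i) = (y + \<delta> \<cdot>\<^sub>v q, \<rho>', q')"
      by (simp add: cc Let_def alpha \<rho>'_def[symmetric] q'_def[symmetric])
    have w: "w \<in> carrier_vec n" unfolding w_def using Al p by auto
    have Btq: "Bt *\<^sub>v q \<in> carrier_vec k" using Bt_c q by auto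
    have r': "r' \<in> carrier_vec n" unfolding r'_def using r w by auto
    have rho': "\<rho>' \<in> carrier_vec k" unfolding \<rho>'_def using rho Btq by auto
    have Tr': "T *\<^sub>v r' \<in> carrier_vec n" using T r' by auto
    have p': "p' \<in> carrier_vec n" unfolding p'_def using Tr' p by auto
    have q': "q' \<in> carrier_vec k" unfolding q'_def using rho' q by auto
    have Spq: "S *\<^sub>v (V *\<^sub>v q) = p" using pq SSi p by metis
    have Sw: "S *\<^sub>v w = V *\<^sub>v (Bt *\<^sub>v q)"
    proof -
      have "V *\<^sub>v (Bt *\<^sub>v q) = V *\<^sub>v (?Vh *\<^sub>v (S *\<^sub>v (Al *\<^sub>v (S *\<^sub>v (Si *\<^sub>v p)))))"
        using Btv[OF q] pq by simp
      also have "\<dots> = S *\<^sub>v (Al *\<^sub>v (S *\<^sub>v (Si *\<^sub>v p)))" using PB Si p by auto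
      also have "\<dots> = S *\<^sub>v w" using SSi[OF p] w_def by simp
      finally show ?thesis by simp
    qed
    have Sr': "S *\<^sub>v r' = V *\<^sub>v \<rho>'"
      unfolding r'_def \<rho>'_def using S r w V rho Btq
      by (simp add: mult_minus_distrib_mat_vec[of _ n n] mult_minus_distrib_mat_vec[of _ n k]
          mult_mat_vec[of _ n n] mult_mat_vec[of _ n k] Sr Sw)
    have g': "g' = hinner \<rho>' \<rho>'"
      unfolding g'_def using gT[OF r'] Sr' hinner_iso[OF V rho' rho'] by simp
    have pq': "Si *\<^sub>v p' = V *\<^sub>v q'"
      unfolding p'_def q'_def using Si Tr' p V rho' q
      by (simp add: mult_add_distrib_mat_vec[of _ n n] mult_add_distrib_mat_vec[of _ n k]
          mult_mat_vec[of _ n n] mult_mat_vec[of _ n k] SiT[OF r'] Sr' pq g g')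
    have xy': "?Vh *\<^sub>v (Si *\<^sub>v (x + \<delta> \<cdot>\<^sub>v p)) = y + \<delta> \<cdot>\<^sub>v q"
      using Si x p Vh q V
      by (simp add: mult_add_distrib_mat_vec[of _ n n] mult_add_distrib_mat_vec[of _ k n]
          mult_mat_vec[of _ n n] mult_mat_vec[of _ k n] pq VhV xy)
    show ?case unfolding pcS ccS split
      using x p y q r' p' rho' q' Sr' g' pq' xy' Bq[OF p' q' pq'] by auto
  qed
qed


theorem lemma2p1:
  fixes A M T V :: "complex mat" and x0 :: "complex vec" and n k :: nat and l1 :: real
  assumes A: "A \<in> carrier_mat n n" "hermitian A"
    and M: "M \<in> carrier_mat n n" "pos_def M"
    and eig1: "poly (pencil_char_poly A M) (complex_of_real l1) = 0"
    and simple1: "order (complex_of_real l1) (pencil_char_poly A M) = 1"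
    and others: "\<And>\<mu>. poly (pencil_char_poly A M) \<mu> = 0 \<Longrightarrow> \<mu> \<noteq> complex_of_real l1 \<Longrightarrow>
                   \<mu> \<in> \<real> \<and> l1 < Re \<mu>"
    and T: "T \<in> carrier_mat n n" "pos_def T"
    and x0: "x0 \<in> carrier_vec n"
    and not_eigvec: "\<not> (x0 \<noteq> 0\<^sub>v n \<and> A *\<^sub>v x0 = complex_of_real l1 \<cdot>\<^sub>v (M *\<^sub>v x0))"
    and not_Morth: "\<exists>v \<in> carrier_vec n. A *\<^sub>v v = complex_of_real l1 \<cdot>\<^sub>v (M *\<^sub>v v) \<and>
                      hinner v (M *\<^sub>v x0) \<noteq> 0"
    and V: "V \<in> carrier_mat n k" "mat_adjoint V * V = 1\<^sub>m k"
    and V_span: "{V *\<^sub>v y | y. y \<in> carrier_vec k} =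
       {(psqrt T * (A - complex_of_real l1 \<cdot>\<^sub>m M) * psqrt T) *\<^sub>v z | z. z \<in> carrier_vec n}"
  shows "\<forall>N. pcg_defined (A - complex_of_real l1 \<cdot>\<^sub>m M) T x0 N \<longrightarrow>
           (let B = psqrt T * (A - complex_of_real l1 \<cdot>\<^sub>m M) * psqrt T;
                Bt = mat_adjoint V * B * V;
                xt = (\<lambda>i. mat_adjoint V *\<^sub>v (psqrt_inv T *\<^sub>v pcg_x (A - complex_of_real l1 \<cdot>\<^sub>m M) T x0 i))
            in cg_defined Bt (xt 0) N \<and> (\<forall>i \<le> N. xt i = cg_x Bt (xt 0) i))"
proof (intro allI impI)
  fix N
  assume def: "pcg_defined (A - complex_of_real l1 \<cdot>\<^sub>m M) T x0 N"
  define Al where "Al = A - complex_of_real l1 \<cdot>\<^sub>m M"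
  define S where "S = psqrt T"
  define Si where "Si = psqrt_inv T"
  define Bt where "Bt = mat_adjoint V * (S * Al * S) * V"
  define y0 where "y0 = mat_adjoint V *\<^sub>v (Si *\<^sub>v x0)"
  from psqrt_props[OF T] have S: "S \<in> carrier_mat n n" "mat_adjoint S = S" "S * S = T"
    and Si: "Si \<in> carrier_mat n n" "Si * S = 1\<^sub>m n" "S * Si = 1\<^sub>m n"
    unfolding S_def Si_def by auto
  have Al: "Al \<in> carrier_mat n n" unfolding Al_def using A M by auto
  have AA: "mat_adjoint A = A" and MM: "mat_adjoint M = M" using A M unfolding hermitian_def pos_def_def by auto
  have Al_h: "mat_adjoint Al = Al"
  proof (rule eq_matI)
    fix i j assume ij: "i < dim_row Al" "j < dim_col Al"
    have a: "A $$ (i,j) = cnj (A $$ (j,i))" using arg_cong[OF AA, of "\<lambda>X. X $$ (i,j)"] A ij Al by auto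
    have m: "M $$ (i,j) = cnj (M $$ (j,i))" using arg_cong[OF MM, of "\<lambda>X. X $$ (i,j)"] M ij Al by auto
    show "mat_adjoint Al $$ (i, j) = Al $$ (i, j)" using ij Al A M a m unfolding Al_def by auto
  qed (use Al in auto)
  have Bf: "(S * Al * S) *\<^sub>v z = S *\<^sub>v (Al *\<^sub>v (S *\<^sub>v z))" if z: "z \<in> carrier_vec n" for z
  proof -
    have "(S * Al * S) *\<^sub>v z = (S * Al) *\<^sub>v (S *\<^sub>v z)"
      by (rule assoc_mult_mat_vec[of _ n n]) (use S Al z in auto)
    also have "\<dots> = S *\<^sub>v (Al *\<^sub>v (S *\<^sub>v z))"
      by (rule assoc_mult_mat_vec[of _ n n]) (use S Al z in auto)
    finally show ?thesis .
  qed
  have span: "\<exists>y \<in> carrier_vec k. S *\<^sub>v (Al *\<^sub>v (S *\<^sub>v z)) = V *\<^sub>v y" if z: "z \<in> carrier_vec n" for z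
  proof -
    have "(S * Al * S) *\<^sub>v z \<in> {V *\<^sub>v y | y. y \<in> carrier_vec k}"
      unfolding V_span S_def[symmetric] Al_def[symmetric] using z by auto
    then show ?thesis using Bf[OF z] by auto
  qed
  have VhV: "mat_adjoint V *\<^sub>v (V *\<^sub>v z) = z" if "z \<in> carrier_vec k" for z
    using that V by (simp flip: assoc_mult_mat_vec[of _ k n _ k])
  have PB: "V *\<^sub>v (mat_adjoint V *\<^sub>v (S *\<^sub>v (Al *\<^sub>v (S *\<^sub>v z)))) = S *\<^sub>v (Al *\<^sub>v (S *\<^sub>v z))"
    if z: "z \<in> carrier_vec n" for z
    using span[OF z] VhV by auto
  have selfadj: "hinner a (S *\<^sub>v (Al *\<^sub>v (S *\<^sub>v c))) = hinner (S *\<^sub>v (Al *\<^sub>v (S *\<^sub>v a))) c"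
    if a: "a \<in> carrier_vec n" and c: "c \<in> carrier_vec n" for a c
  proof -
    have "hinner a (S *\<^sub>v (Al *\<^sub>v (S *\<^sub>v c))) = hinner (S *\<^sub>v a) (Al *\<^sub>v (S *\<^sub>v c))"
      using hinner_adj[OF S(1) a, of "Al *\<^sub>v (S *\<^sub>v c)"] S Al c by simp
    also have "\<dots> = hinner (Al *\<^sub>v (S *\<^sub>v a)) (S *\<^sub>v c)"
      using hinner_adj[OF Al, of "S *\<^sub>v a" "S *\<^sub>v c"] Al_h S Al a c by simp
    also have "\<dots> = hinner (S *\<^sub>v (Al *\<^sub>v (S *\<^sub>v a))) c"
      using hinner_adj[OF S(1), of "Al *\<^sub>v (S *\<^sub>v a)" c] S Al a c by simp
    finally show ?thesis .
  qed
  have BP: "S *\<^sub>v (Al *\<^sub>v (S *\<^sub>v (V *\<^sub>v (mat_adjoint V *\<^sub>v z)))) = S *\<^sub>v (Al *\<^sub>v (S *\<^sub>v z))"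
    if z: "z \<in> carrier_vec n" for z
  proof -
    define u where "u = V *\<^sub>v (mat_adjoint V *\<^sub>v z) - z"
    have u: "u \<in> carrier_vec n" unfolding u_def using V z by auto
    define b where "b = S *\<^sub>v (Al *\<^sub>v (S *\<^sub>v u))"
    have b: "b \<in> carrier_vec n" unfolding b_def using S Al u by auto
    obtain c where c: "c \<in> carrier_vec k" and bc: "S *\<^sub>v (Al *\<^sub>v (S *\<^sub>v b)) = V *\<^sub>v c"
      using span[OF b] by auto
    have Vhu: "mat_adjoint V *\<^sub>v u = 0\<^sub>v k"
      unfolding u_def using V z by (simp add: mult_minus_distrib_mat_vec[of _ k n] VhV)
    have "hinner b b = hinner (V *\<^sub>v c) u"
      using selfadj[OF b u] bc b_def by simp
    also have "\<dots> = hinner c (mat_adjoint V *\<^sub>v u)"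
      using hinner_adj[of "mat_adjoint V" k n c u] V c u by simp
    also have "\<dots> = 0" unfolding Vhu using c by (simp add: hinner_sum)
    finally have "b = 0\<^sub>v n" using hinner_self_0[OF b] by simp
    moreover have "b = S *\<^sub>v (Al *\<^sub>v (S *\<^sub>v (V *\<^sub>v (mat_adjoint V *\<^sub>v z)))) - S *\<^sub>v (Al *\<^sub>v (S *\<^sub>v z))"
      unfolding b_def u_def using S Al V z
      by (simp add: mult_minus_distrib_mat_vec[of _ n n])
    ultimately have "S *\<^sub>v (Al *\<^sub>v (S *\<^sub>v (V *\<^sub>v (mat_adjoint V *\<^sub>v z)))) - S *\<^sub>v (Al *\<^sub>v (S *\<^sub>v z)) = 0\<^sub>v n"
      by simp
    moreover have "S *\<^sub>v (Al *\<^sub>v (S *\<^sub>v (V *\<^sub>v (mat_adjoint V *\<^sub>v z)))) \<in> carrier_vec n"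
      using S Al V z by simp
    moreover have "S *\<^sub>v (Al *\<^sub>v (S *\<^sub>v z)) \<in> carrier_vec n"
      using S Al z by simp
    ultimately show ?thesis using vec_diff_zero by blast
  qed
  note inv = cg_inv[OF Al Al_h T(1) S Si V PB BP x0 Bt_def y0_def]
  have x00: "pcg_x Al T x0 0 = x0" unfolding pcg_x_def by (simp add: Let_def)
  have main1: "cg_defined Bt y0 N"
    unfolding cg_defined_def
  proof (intro conjI allI impI)
    fix j assume j: "j < N"
    obtain x r g p where pc: "pcg Al T x0 j = (x,r,g,p)" by (cases "pcg Al T x0 j") auto
    obtain y \<rho> q where cc: "cg Bt y0 j = (y,\<rho>,q)" by (cases "cg Bt y0 j") auto
    from def j pc have "hinner (Al *\<^sub>v p) p \<noteq> 0" unfolding pcg_defined_def Al_def[symmetric] by force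
    with inv[of j] show "case cg Bt y0 j of (y, r, p) \<Rightarrow> hinner p (Bt *\<^sub>v p) \<noteq> 0"
      unfolding pc cc by auto
  next
    fix j assume j: "Suc j < N"
    obtain x r g p where pc: "pcg Al T x0 j = (x,r,g,p)" by (cases "pcg Al T x0 j") auto
    obtain y \<rho> q where cc: "cg Bt y0 j = (y,\<rho>,q)" by (cases "cg Bt y0 j") auto
    from def j pc have "g \<noteq> 0" unfolding pcg_defined_def Al_def[symmetric] by force
    with inv[of j] show "case cg Bt y0 j of (y, r, p) \<Rightarrow> hinner r r \<noteq> 0"
      unfolding pc cc by auto
  qed
  have main2: "mat_adjoint V *\<^sub>v (Si *\<^sub>v pcg_x Al T x0 i) = cg_x Bt y0 i" for i
  proof -
    obtain x r g p where pc: "pcg Al T x0 i = (x,r,g,p)" by (cases "pcg Al T x0 i") auto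
    obtain y \<rho> q where cc: "cg Bt y0 i = (y,\<rho>,q)" by (cases "cg Bt y0 i") auto
    show ?thesis using inv[of i] unfolding pcg_x_def cg_x_def pc cc by auto
  qed
  show "let B = psqrt T * (A - complex_of_real l1 \<cdot>\<^sub>m M) * psqrt T;
                Bt = mat_adjoint V * B * V;
                xt = (\<lambda>i. mat_adjoint V *\<^sub>v (psqrt_inv T *\<^sub>v pcg_x (A - complex_of_real l1 \<cdot>\<^sub>m M) T x0 i))
            in cg_defined Bt (xt 0) N \<and> (\<forall>i \<le> N. xt i = cg_x Bt (xt 0) i)"
    unfolding Let_def Al_def[symmetric] S_def[symmetric] Si_def[symmetric] Bt_def[symmetric] x00 y0_def[symmetric]
    using main1 main2 by auto
qed


end
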